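(* Let $N$ be a positive integer and $t>-\log N$. For integers $n\ge N$ let $$\delta_n(t,N)=\int_N^{n+1}\frac{dx}{t+\log x}-\sum_{k=N}^{n}\frac{1}{t+\log(k+\frac12)},$$ and set $\delta_{N-1}(t,N)=0$. (1) The sequence $(\delta_n(t,N))_{n\ge N}$ is positive, strictly increasing and bounded above; hence $\delta(t,N)=\lim_{n\to\infty}\delta_n(t,N)>0$ exists. (2) For all $n\ge N$, $\delta(t,N)-\delta_{n-1}(t,N)=\delta(t,n)$ and $$\frac{1}{24(n+1)(t+\log(n+1))^2}\le\delta(t,n)\le\frac{1}{24(n+\frac12)(t+\log(n+\frac12))^2}+\frac{1}{24n^2(t+\log n)^2}+\frac{1}{12n^2(t+\log n)^3}.$$ (3) $\delta(t,N)=\delta_{n-1}(t,N)+\frac{1+o(1)}{24n(\log n)^2}$ as $n\to\infty$, and $\delta(t,N)=O\!\left(\frac1{Nt^2}\right)$ as $t\to\infty$, with implied constant independent of $N$. *)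

theory Defs
  imports "HOL-Analysis.Analysis" "HOL-Library.Landau_Symbols"
begin

text \<open>delta_n(t,N) for n >= N; for n = N - 1 the formula gives 0 automatically
  (empty sum, integral over the degenerate interval [N,N]).\<close>
definition delta_seq :: "real \<Rightarrow> nat \<Rightarrow> nat \<Rightarrow> real" where
  "delta_seq t N n =
     integral {real N..real (n+1)} (\<lambda>x. 1 / (t + ln x))
     - (\<Sum>k=N..n. 1 / (t + ln (real k + 1/2)))"

definition delta :: "real \<Rightarrow> nat \<Rightarrow> real" where
  "delta t N = lim (\<lambda>n. delta_seq t N n)"

end

theory Submission
  imports Defs "HOL-Real_Asymp.Real_Asymp"
begin


lemma Dgen: fixes c x t :: real and j k :: nat assumes "x > 0" "t + ln x > 0"
  shows "DERIV (\<lambda>y. c/(y^j*(t + ln y)^k)) x :> -c*j/(x^(j+1)*(t+ln x)^k) - c*k/(x^(j+1)*(t+ln x)^(k+1))"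
proof -
  define u where "u = t + ln x"
  have u: "u > 0" using assms u_def by simp
  have d1: "DERIV (\<lambda>y. y^j) x :> real j * x^(j-1)" by (auto intro!: derivative_eq_intros)
  have d2: "DERIV (\<lambda>y. (t + ln y)^k) x :> real k * u^(k-1) * (1/x)"
    unfolding u_def using assms by (auto intro!: derivative_eq_intros)
  have d3: "DERIV (\<lambda>y. y^j*(t + ln y)^k) x :> real j * x^(j-1) * u^k + x^j * (real k * u^(k-1) * (1/x))"
    using DERIV_mult[OF d1 d2] by (simp add: u_def mult_ac)
  have d4: "DERIV (\<lambda>y. c/(y^j*(t + ln y)^k)) x :> (0 * (x^j*u^k) - c * (real j * x^(j-1) * u^k + x^j * (real k * u^(k-1) * (1/x)))) / ((x^j*u^k)*(x^j*u^k))"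
    using DERIV_divide[OF DERIV_const d3] u assms(1) by (simp add: u_def)
  have e: "(0 * (x^j*u^k) - c * (real j * x^(j-1) * u^k + x^j * (real k * u^(k-1) * (1/x)))) / ((x^j*u^k)*(x^j*u^k))
     = -c*j/(x^(j+1)*u^k) - c*k/(x^(j+1)*u^(k+1))"
    using u assms(1) apply (cases j; cases k) apply (simp_all add: field_simps)
    done
  show ?thesis using d4 e by (simp add: u_def)
qed




definition F0 :: "real \<Rightarrow> real \<Rightarrow> real" where "F0 t = (\<lambda>y. 1/(y^0*(t + ln y)^1))"
definition F1 :: "real \<Rightarrow> real \<Rightarrow> real" where "F1 t = (\<lambda>y. (-1)/(y^1*(t + ln y)^2))"
definition F2 :: "real \<Rightarrow> real \<Rightarrow> real" where
  "F2 t = (\<lambda>y. 1/(y^2*(t + ln y)^2) + 2/(y^2*(t + ln y)^3))"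
definition F3 :: "real \<Rightarrow> real \<Rightarrow> real" where
  "F3 t = (\<lambda>y. (-2)/(y^3*(t + ln y)^2) + (-6)/(y^3*(t + ln y)^3) + (-6)/(y^3*(t + ln y)^4))"
definition F4 :: "real \<Rightarrow> real \<Rightarrow> real" where
  "F4 t = (\<lambda>y. 6/(y^4*(t + ln y)^2) + 22/(y^4*(t + ln y)^3) + 36/(y^4*(t + ln y)^4) + 24/(y^4*(t + ln y)^5))"

lemma Dgen': fixes c x t :: real and j k :: nat assumes "x > 0" "t + ln x > 0" "j1 = j+1" "k1 = k+1"
  shows "DERIV (\<lambda>y. c/(y^j*(t + ln y)^k)) x :> -c*j/(x^j1*(t+ln x)^k) - c*k/(x^j1*(t+ln x)^k1)"
  using Dgen[OF assms(1,2)] assms(3,4) by simp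

lemma D0: assumes "x > 0" "t + ln x > 0" shows "DERIV (F0 t) x :> F1 t x"
proof -
  have "DERIV (F0 t) x :> - 1 * real 0 / (x ^ 1 * (t + ln x) ^ 1) - 1 * real 1 / (x ^ 1 * (t + ln x) ^ 2)"
    unfolding F0_def by (rule Dgen'[OF assms]) simp_all
  thus ?thesis by (simp add: F1_def)
qed

lemma D1: assumes "x > 0" "t + ln x > 0" shows "DERIV (F1 t) x :> F2 t x"
proof -
  have "DERIV (F1 t) x :> - (-1) * real 1 / (x ^ 2 * (t + ln x) ^ 2) - (-1) * real 2 / (x ^ 2 * (t + ln x) ^ 3)"
    unfolding F1_def by (rule Dgen'[OF assms]) simp_all
  thus ?thesis by (simp add: F2_def)
qed

lemma D2: assumes "x > 0" "t + ln x > 0" shows "DERIV (F2 t) x :> F3 t x"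
proof -
  have "DERIV (F2 t) x :> (- 1 * real 2 / (x ^ 3 * (t + ln x) ^ 2) - 1 * real 2 / (x ^ 3 * (t + ln x) ^ 3))
     + (- 2 * real 2 / (x ^ 3 * (t + ln x) ^ 3) - 2 * real 3 / (x ^ 3 * (t + ln x) ^ 4))"
    unfolding F2_def by (intro DERIV_add Dgen'[OF assms]) simp_all
  moreover have "(- 1 * real 2 / (x ^ 3 * (t + ln x) ^ 2) - 1 * real 2 / (x ^ 3 * (t + ln x) ^ 3))
     + (- 2 * real 2 / (x ^ 3 * (t + ln x) ^ 3) - 2 * real 3 / (x ^ 3 * (t + ln x) ^ 4)) = F3 t x"
    unfolding F3_def by (simp add: diff_divide_distrib add_divide_distrib[symmetric])
  ultimately show ?thesis by simp
qed

lemma D3: assumes "x > 0" "t + ln x > 0" shows "DERIV (F3 t) x :> F4 t x"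
proof -
  have "DERIV (F3 t) x :> ((- (-2) * real 3 / (x ^ 4 * (t + ln x) ^ 2) - (-2) * real 2 / (x ^ 4 * (t + ln x) ^ 3))
     + (- (-6) * real 3 / (x ^ 4 * (t + ln x) ^ 3) - (-6) * real 3 / (x ^ 4 * (t + ln x) ^ 4)))
     + (- (-6) * real 3 / (x ^ 4 * (t + ln x) ^ 4) - (-6) * real 4 / (x ^ 4 * (t + ln x) ^ 5))"
    unfolding F3_def by (intro DERIV_add Dgen'[OF assms]) simp_all
  moreover have "((- (-2) * real 3 / (x ^ 4 * (t + ln x) ^ 2) - (-2) * real 2 / (x ^ 4 * (t + ln x) ^ 3))
     + (- (-6) * real 3 / (x ^ 4 * (t + ln x) ^ 3) - (-6) * real 3 / (x ^ 4 * (t + ln x) ^ 4)))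
     + (- (-6) * real 3 / (x ^ 4 * (t + ln x) ^ 4) - (-6) * real 4 / (x ^ 4 * (t + ln x) ^ 5)) = F4 t x"
    unfolding F4_def by (simp add: diff_divide_distrib add_divide_distrib[symmetric])
  ultimately show ?thesis by simp
qed




lemma mid3:
  fixes p0 p1 p2 p3 :: "real \<Rightarrow> real" and c h :: real
  assumes h: "h > 0"
    and d0: "\<And>y. c - h \<le> y \<Longrightarrow> y \<le> c + h \<Longrightarrow> DERIV p0 y :> p1 y"
    and d1: "\<And>y. c - h \<le> y \<Longrightarrow> y \<le> c + h \<Longrightarrow> DERIV p1 y :> p2 y"
    and d2: "\<And>y. c - h \<le> y \<Longrightarrow> y \<le> c + h \<Longrightarrow> DERIV p2 y :> p3 y"
  shows "\<exists>z1 z2. z1 \<in> {c-h..c+h} \<and> z2 \<in> {c-h..c+h} \<and>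
           p0 (c+h) - p0 (c-h) = 2*h*p1 c + h^3/6 * (p3 z1 + p3 z2)"
proof -
  define diff where "diff m = (if m = 0 then p0 else if m = 1 then p1 else if m = 2 then p2 else p3)" for m :: nat
  have D: "\<forall>m t. m < 3 \<and> c - h \<le> t \<and> t \<le> c + h \<longrightarrow> DERIV (diff m) t :> diff (Suc m) t"
  proof (intro allI impI)
    fix m :: nat and t assume a: "m < 3 \<and> c - h \<le> t \<and> t \<le> c + h"
    then have "m = 0 \<or> m = 1 \<or> m = 2" by auto
    then show "DERIV (diff m) t :> diff (Suc m) t"
      using a d0 d1 d2 by (auto simp: diff_def)
  qed
  have s: "(\<Sum>m<3. g m) = g 0 + g 1 + g (2::nat)" for g :: "nat \<Rightarrow> real"
    by (simp add: eval_nat_numeral)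
  obtain z1 where z1: "c < z1 \<and> z1 < c + h"
      "p0 (c+h) = (\<Sum>m<3. (diff m c / fact m) * ((c+h) - c)^m) + (diff 3 z1 / fact 3) * ((c+h) - c)^3"
    using Taylor[of 3 diff p0 "c-h" "c+h" c "c+h"] D h by (auto simp: diff_def)
  obtain z2 where z2: "c - h < z2 \<and> z2 < c"
      "p0 (c-h) = (\<Sum>m<3. (diff m c / fact m) * ((c-h) - c)^m) + (diff 3 z2 / fact 3) * ((c-h) - c)^3"
    using Taylor[of 3 diff p0 "c-h" "c+h" c "c-h"] D h by (auto simp: diff_def)
  have f3: "fact 3 = (6::real)" by (simp add: fact_numeral)
  have "p0 (c+h) - p0 (c-h) = 2*h*p1 c + h^3/6 * (p3 z1 + p3 z2)"
    unfolding z1(2) z2(2) s f3 by (simp add: diff_def field_simps eval_nat_numeral)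
  then show ?thesis using z1(1) z2(1) by (intro exI[of _ z1] exI[of _ z2]) auto
qed




lemma dom_mono: fixes a y t :: real assumes "0 < a" "a \<le> y" "t + ln a > 0" shows "y > 0 \<and> t + ln y > 0"
proof -
  have y: "y > 0" using assms by simp
  have "ln a \<le> ln y" using ln_le_cancel_iff[OF assms(1) y] assms(2) by simp
  then show ?thesis using y assms(3) by simp
qed

lemma F2_pos: assumes "x > 0" "t + ln x > 0" shows "F2 t x > 0"
proof -
  have "0 < 1/(x^2*u^2) + 2/(x^2*u^3)" if "u > 0" for u :: real using that assms(1) by (intro add_pos_pos divide_pos_pos mult_pos_pos zero_less_power) auto
  from this[OF assms(2)] show ?thesis by (simp add: F2_def)
qed
lemma F4_pos: assumes "x > 0" "t + ln x > 0" shows "F4 t x > 0"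
proof -
  have "0 < 6/(x^4*u^2) + 22/(x^4*u^3) + 36/(x^4*u^4) + 24/(x^4*u^5)" if "u > 0" for u :: real using that assms(1) by (intro add_pos_pos divide_pos_pos mult_pos_pos zero_less_power) auto
  from this[OF assms(2)] show ?thesis by (simp add: F4_def)
qed
lemma F3_neg: assumes "x > 0" "t + ln x > 0" shows "F3 t x < 0"
proof -
  have "(-2)/(x^3*u^2) + (-6)/(x^3*u^3) + (-6)/(x^3*u^4) < 0" if "u > 0" for u :: real using that assms(1) by (intro add_neg_neg divide_neg_pos mult_pos_pos zero_less_power) auto
  from this[OF assms(2)] show ?thesis by (simp add: F3_def)
qed

lemma F2_anti: assumes "0 < a" "a \<le> b" "t + ln a > 0" shows "F2 t b \<le> F2 t a"
proof (rule DERIV_nonpos_imp_nonincreasing[OF assms(2)])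
  fix x assume "a \<le> x" "x \<le> b"
  then have "x > 0" "t + ln x > 0" using dom_mono[OF assms(1) _ assms(3)] by auto
  then show "\<exists>y. DERIV (F2 t) x :> y \<and> y \<le> 0" using D2 F3_neg by (intro exI[of _ "F3 t x"]) (auto intro: less_imp_le)
qed

lemma F0_cont: assumes "0 < a" "t + ln a > 0" shows "continuous_on {a..b} (F0 t)"
proof (intro continuous_at_imp_continuous_on ballI)
  fix x assume "x \<in> {a..b}"
  then have "x > 0" "t + ln x > 0" using dom_mono[OF assms(1) _ assms(2)] by auto
  then show "isCont (F0 t) x" using D0 DERIV_isCont by blast
qed

lemma e_bounds:
  fixes k t :: real
  assumes k: "k > 0" "t + ln k > 0"
  shows "F2 t (k+1)/24 \<le> integral {k..k+1} (F0 t) - F0 t (k+1/2)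
       \<and> integral {k..k+1} (F0 t) - F0 t (k+1/2) \<le> F2 t k / 24
       \<and> 0 < integral {k..k+1} (F0 t) - F0 t (k+1/2)"
proof -
  define a where "a = k * exp (-(t + ln k)/2)"
  have a0: "a > 0" using k by (simp add: a_def)
  have "ln a = ln k + (-(t + ln k)/2)" using k by (simp add: a_def ln_mult)
  then have ta: "t + ln a > 0" using k by (simp add: field_simps)
  have "exp (-(t + ln k)/2) < 1" using k by simp
  then have ak: "a < k" using k by (simp add: a_def)
  define B where "B = k + 2"
  have cont: "continuous_on {a..B} (F0 t)" by (rule F0_cont[OF a0 ta])
  define Phi where "Phi y = integral {a..y} (F0 t)" for y
  have dPhi: "DERIV Phi y :> F0 t y" if "k \<le> y" "y \<le> k + 1" for y
  proof -
    have yin: "y \<in> {a..B}" using that ak unfolding B_def by simp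
    have 1: "(Phi has_real_derivative F0 t y) (at y within {a..B})"
      unfolding Phi_def by (rule integral_has_real_derivative[OF cont yin])
    have i: "y \<in> interior {a..B}" using that ak unfolding B_def interior_atLeastAtMost_real by simp
    from 1 show ?thesis unfolding at_within_interior[OF i] .
  qed
  have dom: "y > 0 \<and> t + ln y > 0" if "k \<le> y" for y using dom_mono[OF k(1) that k(2)] .
  obtain z1 z2 where z: "z1 \<in> {k+1/2-1/2..k+1/2+1/2}" "z2 \<in> {k+1/2-1/2..k+1/2+1/2}"
     "Phi (k+1/2+1/2) - Phi (k+1/2-1/2) = 2*(1/2)*F0 t (k+1/2) + (1/2)^3/6 * (F2 t z1 + F2 t z2)"
  proof -
    have h: "(1/2::real) > 0" by simp
    have a1: "DERIV Phi y :> F0 t y" if "k+1/2-1/2 \<le> y" "y \<le> k+1/2+1/2" for y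
      using that by (intro dPhi) simp_all
    have a2: "DERIV (F0 t) y :> F1 t y" if "k+1/2-1/2 \<le> y" "y \<le> k+1/2+1/2" for y
    proof -
      have "k \<le> y" using that by simp
      from dom[OF this] show ?thesis using D0 by blast
    qed
    have a3: "DERIV (F1 t) y :> F2 t y" if "k+1/2-1/2 \<le> y" "y \<le> k+1/2+1/2" for y
    proof -
      have "k \<le> y" using that by simp
      from dom[OF this] show ?thesis using D1 by blast
    qed
    show ?thesis using mid3[OF h a1 a2 a3] that by blast
  qed
  have int: "integral {k..k+1} (F0 t) = Phi (k+1) - Phi k"
  proof -
    have "(F0 t) integrable_on {a..k+1}"
      by (rule integrable_continuous_interval, rule F0_cont[OF a0 ta])
    then have "integral {a..k} (F0 t) + integral {k..k+1} (F0 t) = integral {a..k+1} (F0 t)"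
      using Henstock_Kurzweil_Integration.integral_combine[of a k "k+1" "F0 t"] ak by simp
    then show ?thesis unfolding Phi_def by linarith
  qed
  have eq: "integral {k..k+1} (F0 t) - F0 t (k+1/2) = (F2 t z1 + F2 t z2)/48"
  proof -
    have e1: "k+1/2+1/2 = k+1" "k+1/2-1/2 = k" by simp_all
    have "Phi (k+1) - Phi k = F0 t (k+1/2) + (F2 t z1 + F2 t z2)/48" using z(3) unfolding e1 by (simp add: power_divide)
    then show ?thesis using int by linarith
  qed
  have z1: "k \<le> z1" "z1 \<le> k+1" and z2: "k \<le> z2" "z2 \<le> k+1" using z(1,2) by auto
  have "F2 t (k+1) \<le> F2 t z1" "F2 t (k+1) \<le> F2 t z2"
    using F2_anti[of z1 "k+1" t] F2_anti[of z2 "k+1" t] z1 z2 dom[OF z1(1)] dom[OF z2(1)] by auto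
  moreover have "F2 t z1 \<le> F2 t k" "F2 t z2 \<le> F2 t k"
    using F2_anti[of k z1 t] F2_anti[of k z2 t] z1 z2 k by auto
  moreover have "F2 t z1 > 0" "F2 t z2 > 0" using F2_pos dom[OF z1(1)] dom[OF z2(1)] by auto
  ultimately show ?thesis unfolding eq by auto
qed

lemma tel_low: assumes "k > 0" "t + ln k > 0" shows "F1 t (k+1) - F1 t k \<le> F2 t k"
proof -
  have dom: "y > 0 \<and> t + ln y > 0" if "k \<le> y" for y using dom_mono[OF assms(1) that assms(2)] .
  obtain z where z: "k < z" "z < k+1" "F1 t (k+1) - F1 t k = (k + 1 - k) * F2 t z"
  proof -
    have a1: "DERIV (F1 t) y :> F2 t y" if "k \<le> y" "y \<le> k+1" for y using D1 dom that by simp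
    show ?thesis using MVT2[of k "k+1" "F1 t" "F2 t", OF _ a1] that by auto
  qed
  have "F2 t z \<le> F2 t k" using F2_anti[of k z t] z assms by auto
  then show ?thesis using z by simp
qed

lemma tel_up: assumes "k - 1/2 > 0" "t + ln (k - 1/2) > 0" shows "F2 t k \<le> F1 t (k+1/2) - F1 t (k-1/2)"
proof -
  have dom: "y > 0 \<and> t + ln y > 0" if "k - 1/2 \<le> y" for y using dom_mono[OF assms(1) that assms(2)] .
  obtain z1 z2 where z: "z1 \<in> {k-1/2..k+1/2}" "z2 \<in> {k-1/2..k+1/2}"
     "F1 t (k+1/2) - F1 t (k-1/2) = 2*(1/2)*F2 t k + (1/2)^3/6 * (F4 t z1 + F4 t z2)"
  proof -
    have h: "(1/2::real) > 0" by simp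
    have a1: "DERIV (F1 t) y :> F2 t y" if "k-1/2 \<le> y" "y \<le> k+1/2" for y using D1 dom that by simp
    have a2: "DERIV (F2 t) y :> F3 t y" if "k-1/2 \<le> y" "y \<le> k+1/2" for y using D2 dom that by simp
    have a3: "DERIV (F3 t) y :> F4 t y" if "k-1/2 \<le> y" "y \<le> k+1/2" for y using D3 dom that by simp
    show ?thesis using mid3[OF h a1 a2 a3] that by blast
  qed
  have "F4 t z1 > 0" "F4 t z2 > 0" using F4_pos dom z(1,2) by auto
  then show ?thesis using z(3) by simp
qed




definition e :: "real \<Rightarrow> nat \<Rightarrow> real" where
  "e t k = integral {real k..real k + 1} (F0 t) - F0 t (real k + 1/2)"

lemma F0_eq: "F0 t = (\<lambda>x. 1 / (t + ln x))"
  by (simp add: F0_def fun_eq_iff)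

lemma dom_nat: assumes "N \<ge> 1" "t + ln (real N) > 0" "N \<le> k"
  shows "real k > 0" "t + ln (real k) > 0"
  using dom_mono[of "real N" "real k" t] assms by auto

lemma e_facts: assumes "k \<ge> 1" "t + ln (real k) > 0"
  shows "F2 t (real k + 1)/24 \<le> e t k" "e t k \<le> F2 t (real k)/24" "0 < e t k"
  using e_bounds[of "real k" t] assms unfolding e_def by auto

lemma seq_split: assumes "N \<ge> 1" "t + ln (real N) > 0"
  shows "delta_seq t N (N + j) = (\<Sum>i<Suc j. e t (N + i))"
proof (induction j)
  case 0
  show ?case by (simp add: delta_seq_def e_def F0_eq add.commute)
next
  case (Suc j)
  have int: "(F0 t) integrable_on {real N..real (N + j) + 2}"
    by (rule integrable_continuous_interval, rule F0_cont) (use assms in auto)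
  have "integral {real N..real (N+j) + 1} (F0 t) + integral {real (N+j) + 1..real (N+j) + 2} (F0 t)
      = integral {real N..real (N+j) + 2} (F0 t)"
    using Henstock_Kurzweil_Integration.integral_combine[OF _ _ int, of "real (N+j) + 1"] by simp
  then have "delta_seq t N (N + Suc j) = delta_seq t N (N + j) + e t (N + Suc j)"
    unfolding delta_seq_def e_def F0_eq[symmetric]
    by (simp add: add.commute add.left_commute F0_def)
  then show ?case using Suc by simp
qed

lemma F1_lim: "(\<lambda>j. F1 t (real j + c)) \<longlonglongrightarrow> 0"
proof -
  have "(\<lambda>j. F1 t (real j + c)) = (\<lambda>j. -1/((real j + c)*(t + ln(real j + c))^2))"
    by (simp add: F1_def fun_eq_iff)
  moreover have "(\<lambda>j::nat. -1/((real j + c)*(t + ln(real j + c))^2)) \<longlonglongrightarrow> 0" by real_asymp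
  ultimately show ?thesis by simp
qed

lemma tel: "(\<lambda>j. F1 t (real (Suc j) + c)/24 - F1 t (real j + c)/24) sums (- F1 t c / 24)"
proof -
  have "(\<lambda>j. F1 t (real j + c)/24) \<longlonglongrightarrow> 0/24" by (intro tendsto_divide F1_lim tendsto_const) simp
  from telescope_sums[OF this] show ?thesis by simp
qed

lemma e_up2: assumes "n \<ge> 1" "t + ln (real n) > 0"
  shows "e t (n + Suc j) \<le> F1 t (real (Suc j) + (real n + 1/2))/24 - F1 t (real j + (real n + 1/2))/24"
proof -
  have k: "real (n + Suc j) \<ge> 1" "t + ln (real (n + Suc j)) > 0" using dom_nat[OF assms, of "n + Suc j"] assms by auto
  have d: "real (n + Suc j) - 1/2 > 0 \<and> t + ln (real (n + Suc j) - 1/2) > 0"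
    using dom_mono[of "real n" "real (n + Suc j) - 1/2" t] assms by auto
  have "e t (n + Suc j) \<le> F2 t (real (n + Suc j))/24" using e_facts(2)[of "n + Suc j" t] k by auto
  also have "\<dots> \<le> (F1 t (real (n + Suc j) + 1/2) - F1 t (real (n + Suc j) - 1/2))/24"
    using tel_up[of "real (n + Suc j)" t] d by simp
  also have "real (n + Suc j) + 1/2 = real (Suc j) + (real n + 1/2)" by simp
  also have "real (n + Suc j) - 1/2 = real j + (real n + 1/2)" by simp
  finally show ?thesis by (simp add: diff_divide_distrib)
qed

lemma e_low2: assumes "n \<ge> 1" "t + ln (real n) > 0"
  shows "F1 t (real (Suc j) + (real n + 1))/24 - F1 t (real j + (real n + 1))/24 \<le> e t (n + j)"
proof -
  have k: "n + j \<ge> 1" "t + ln (real (n + j)) > 0" using dom_nat[OF assms, of "n + j"] assms by auto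
  have d: "real (n + j) + 1 > 0 \<and> t + ln (real (n + j) + 1) > 0"
    using dom_mono[of "real n" "real (n + j) + 1" t] assms by auto
  have "F1 t (real (Suc j) + (real n + 1)) - F1 t (real j + (real n + 1))
      = F1 t ((real (n + j) + 1) + 1) - F1 t (real (n + j) + 1)" by (simp add: add_ac)
  also have "\<dots> \<le> F2 t (real (n + j) + 1)" using tel_low[of "real (n+j) + 1" t] d by simp
  finally have "F1 t (real (Suc j) + (real n + 1)) - F1 t (real j + (real n + 1)) \<le> F2 t (real (n + j) + 1)" .
  moreover have "F2 t (real (n + j) + 1)/24 \<le> e t (n + j)" using e_facts(1)[of "n + j" t] k by auto
  ultimately show ?thesis by (simp add: diff_divide_distrib[symmetric])
qed

lemma e_summable: assumes "n \<ge> 1" "t + ln (real n) > 0"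
  shows "summable (\<lambda>j. e t (n + j))"
proof -
  have "summable (\<lambda>j. e t (n + Suc j))"
  proof (rule summable_comparison_test)
    show "\<exists>N. \<forall>j\<ge>N. norm (e t (n + Suc j)) \<le> F1 t (real (Suc j) + (real n + 1/2))/24 - F1 t (real j + (real n + 1/2))/24"
    proof (intro exI allI impI)
      fix j :: nat
      have "0 < e t (n + Suc j)" using e_facts(3)[of "n + Suc j" t] dom_nat[OF assms, of "n + Suc j"] by auto
      then show "norm (e t (n + Suc j)) \<le> F1 t (real (Suc j) + (real n + 1/2))/24 - F1 t (real j + (real n + 1/2))/24"
        using e_up2[OF assms, of j] by simp
    qed
    show "summable (\<lambda>j. F1 t (real (Suc j) + (real n + 1/2))/24 - F1 t (real j + (real n + 1/2))/24)"
      using tel sums_summable by blast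
  qed
  then show ?thesis using summable_Suc_iff[of "\<lambda>j. e t (n + j)"] by simp
qed

lemma delta_lim: assumes "n \<ge> 1" "t + ln (real n) > 0"
  shows "delta_seq t n \<longlonglongrightarrow> (\<Sum>j. e t (n + j))" "delta t n = (\<Sum>j. e t (n + j))"
proof -
  have "(\<lambda>m. \<Sum>i<m. e t (n + i)) \<longlonglongrightarrow> (\<Sum>j. e t (n + j))"
    using summable_LIMSEQ[OF e_summable[OF assms]] .
  then have "(\<lambda>m. \<Sum>i<Suc m. e t (n + i)) \<longlonglongrightarrow> (\<Sum>j. e t (n + j))"
    by (rule LIMSEQ_Suc)
  then have "(\<lambda>m. delta_seq t n (m + n)) \<longlonglongrightarrow> (\<Sum>j. e t (n + j))"
    using seq_split[OF assms] by (simp add: add.commute)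
  then show 1: "delta_seq t n \<longlonglongrightarrow> (\<Sum>j. e t (n + j))" by (rule LIMSEQ_offset)
  then show "delta t n = (\<Sum>j. e t (n + j))" unfolding delta_def by (rule limI)
qed

lemma delta_lower: assumes "n \<ge> 1" "t + ln (real n) > 0"
  shows "1 / (24 * (real n + 1) * (t + ln (real n + 1))^2) \<le> delta t n"
proof -
  have "- F1 t (real 0 + (real n + 1)) / 24 \<le> (\<Sum>j. e t (n + j))"
    using sums_le[OF e_low2[OF assms] tel summable_sums[OF e_summable[OF assms]]] by simp
  then show ?thesis using delta_lim(2)[OF assms] by (simp add: F1_def algebra_simps)
qed

lemma delta_upper: assumes "n \<ge> 1" "t + ln (real n) > 0"
  shows "delta t n \<le> 1 / (24 * (real n + 1/2) * (t + ln (real n + 1/2))^2)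
                        + 1 / (24 * (real n)^2 * (t + ln (real n))^2)
                        + 1 / (12 * (real n)^2 * (t + ln (real n))^3)"
proof -
  have s: "summable (\<lambda>j. e t (n + j))" by (rule e_summable[OF assms])
  have "(\<Sum>j. e t (n + Suc j)) \<le> - F1 t (real 0 + (real n + 1/2)) / 24"
    using sums_le[OF e_up2[OF assms] summable_sums tel] s summable_Suc_iff[of "\<lambda>j. e t (n + j)"] by simp
  moreover have "(\<Sum>j. e t (n + Suc j)) = (\<Sum>j. e t (n + j)) - e t n"
    using suminf_split_head[OF s] by simp
  moreover have "e t n \<le> F2 t (real n)/24" using e_facts(2)[of n t] assms by simp
  ultimately have "delta t n \<le> F2 t (real n)/24 - F1 t (real n + 1/2) / 24"
    using delta_lim(2)[OF assms] by simp
  also have "\<dots> = 1 / (24 * (real n + 1/2) * (t + ln (real n + 1/2))^2)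
                        + 1 / (24 * (real n)^2 * (t + ln (real n))^2)
                        + 1 / (12 * (real n)^2 * (t + ln (real n))^3)"
    by (simp add: F1_def F2_def field_simps)
  finally show ?thesis .
qed




lemma delta_pos: assumes "n \<ge> 1" "t + ln (real n) > 0" shows "delta t n > 0"
proof -
  have "0 < 1 / (24 * (real n + 1) * (t + ln (real n + 1))^2)"
    using dom_mono[of "real n" "real n + 1" t] assms by auto
  then show ?thesis using delta_lower[OF assms] by linarith
qed

lemma small_bound: assumes M: "M \<ge> (1::nat)" and s: "s \<ge> (1::real)"
  shows "\<bar>delta s M\<bar> \<le> 1 * (1 / (real M * s^2))"
proof -
  have lnM: "ln (real M) \<ge> 0" using M by simp
  have lnM2: "ln (real M + 1/2) \<ge> 0" using M by simp
  have d: "s + ln (real M) > 0" using lnM s by linarith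
  have Mp: "real M > 0" using M by simp
  have sp: "s > 0" using s by simp
  have t1: "1 / (24 * (real M + 1/2) * (s + ln (real M + 1/2))^2) \<le> 1 / (24 * real M * s^2)"
  proof (rule frac_le)
    show "24 * real M * s^2 \<le> 24 * (real M + 1/2) * (s + ln (real M + 1/2))^2"
      using lnM2 sp Mp by (intro mult_mono power_mono) auto
  qed (use Mp sp in auto)
  have t2: "1 / (24 * (real M)^2 * (s + ln (real M))^2) \<le> 1 / (24 * real M * s^2)"
  proof (rule frac_le)
    have "real M \<le> (real M)^2" using M by (simp add: power2_eq_square)
    then show "24 * real M * s^2 \<le> 24 * (real M)^2 * (s + ln (real M))^2"
      using lnM sp Mp by (intro mult_mono power_mono) auto
  qed (use Mp sp in auto)
  have t3: "1 / (12 * (real M)^2 * (s + ln (real M))^3) \<le> 1 / (12 * real M * s^2)"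
  proof (rule frac_le)
    have "real M \<le> (real M)^2" using M by (simp add: power2_eq_square)
    moreover have "s^2 \<le> (s + ln (real M))^3"
    proof -
      have "s^2 \<le> s^3" using s by (simp add: power_increasing)
      also have "\<dots> \<le> (s + ln (real M))^3" using lnM sp by (intro power_mono) auto
      finally show ?thesis .
    qed
    ultimately show "12 * real M * s^2 \<le> 12 * (real M)^2 * (s + ln (real M))^3"
      using lnM sp Mp by (intro mult_mono) auto
  qed (use Mp sp in auto)
  have "\<bar>delta s M\<bar> = delta s M" using delta_pos[OF M d] by simp
  also have "\<dots> \<le> 1 / (24 * (real M + 1/2) * (s + ln (real M + 1/2))^2)
                        + 1 / (24 * (real M)^2 * (s + ln (real M))^2)
                        + 1 / (12 * (real M)^2 * (s + ln (real M))^3)"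
    by (rule delta_upper[OF M d])
  also have "\<dots> \<le> 1 / (24 * real M * s^2) + 1 / (24 * real M * s^2) + 1 / (12 * real M * s^2)"
    using t1 t2 t3 by linarith
  also have "\<dots> = (1/6) * (1 / (real M * s^2))" by (simp add: field_simps)
  also have "\<dots> \<le> 1 * (1 / (real M * s^2))" using Mp sp by (intro mult_right_mono) auto
  finally show ?thesis .
qed




theorem proposition3p6:
  fixes t :: real and N :: nat
  assumes "N \<ge> 1" and "t > - ln (real N)"
  shows
    "(\<forall>n\<ge>N. delta_seq t N n > 0)
     \<and> (\<forall>n\<ge>N. delta_seq t N n < delta_seq t N (Suc n))
     \<and> (\<exists>B. \<forall>n\<ge>N. delta_seq t N n \<le> B)
     \<and> (\<lambda>n. delta_seq t N n) \<longlonglongrightarrow> delta t N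
     \<and> delta t N > 0
     \<and> (\<forall>n\<ge>N.
          delta t N - delta_seq t N (n - 1) = delta t n
          \<and> 1 / (24 * (real n + 1) * (t + ln (real n + 1))^2) \<le> delta t n
          \<and> delta t n \<le> 1 / (24 * (real n + 1/2) * (t + ln (real n + 1/2))^2)
                        + 1 / (24 * (real n)^2 * (t + ln (real n))^2)
                        + 1 / (12 * (real n)^2 * (t + ln (real n))^3))
     \<and> (\<lambda>n. delta t N - delta_seq t N (n - 1))
          \<sim>[sequentially] (\<lambda>n. 1 / (24 * real n * (ln (real n))^2))
     \<and> (\<exists>C. \<forall>M::nat. M \<ge> 1 \<longrightarrow>
          (\<forall>\<^sub>F s in at_top. \<bar>delta s M\<bar> \<le> C * (1 / (real M * s^2))))"
proof -
  have N1: "N \<ge> 1" using assms(1) .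
  have tN: "t + ln (real N) > 0" using assms(2) by linarith
  define g where "g j = e t (N + j)" for j
  have gpos: "g j > 0" for j
    unfolding g_def using e_facts(3)[of "N + j" t] dom_nat[OF N1 tN, of "N + j"] by auto
  have gs: "summable g" unfolding g_def by (rule e_summable[OF N1 tN])
  have dN: "delta t N = suminf g" unfolding g_def by (rule delta_lim(2)[OF N1 tN])
  have ss: "delta_seq t N (N + m) = (\<Sum>i<Suc m. g i)" for m
    unfolding g_def by (rule seq_split[OF N1 tN])
  have dom: "n \<ge> 1 \<and> t + ln (real n) > 0" if "n \<ge> N" for n
    using dom_nat[OF N1 tN that] that N1 by auto
  have P1: "\<forall>n\<ge>N. delta_seq t N n > 0"
  proof (intro allI impI)
    fix n assume "N \<le> n"
    then have "n = N + (n - N)" by simp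
    then have "delta_seq t N n = (\<Sum>i<Suc (n - N). g i)" using ss by metis
    also have "\<dots> > 0" using gpos by (intro sum_pos) auto
    finally show "delta_seq t N n > 0" .
  qed
  have P2: "\<forall>n\<ge>N. delta_seq t N n < delta_seq t N (Suc n)"
  proof (intro allI impI)
    fix n assume "N \<le> n"
    then have "n = N + (n - N)" "Suc n = N + Suc (n - N)" by simp_all
    then have "delta_seq t N (Suc n) = delta_seq t N n + g (Suc (n - N))" using ss by (metis sum.lessThan_Suc)
    then show "delta_seq t N n < delta_seq t N (Suc n)" using gpos[of "Suc (n - N)"] by simp
  qed
  have P3: "\<exists>B. \<forall>n\<ge>N. delta_seq t N n \<le> B"
  proof (intro exI allI impI)
    fix n assume "N \<le> n"
    then have "n = N + (n - N)" by simp
    then have "delta_seq t N n = (\<Sum>i<Suc (n - N). g i)" using ss by metis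
    also have "\<dots> \<le> suminf g" using gs gpos by (intro sum_le_suminf) (auto intro: less_imp_le)
    finally show "delta_seq t N n \<le> delta t N" using dN by simp
  qed
  have P4: "(\<lambda>n. delta_seq t N n) \<longlonglongrightarrow> delta t N"
    using delta_lim[OF N1 tN] by simp
  have P5: "delta t N > 0" by (rule delta_pos[OF N1 tN])
  have split: "delta t N - delta_seq t N (n - 1) = delta t n" if n: "n \<ge> N" for n
  proof -
    define m where "m = n - N"
    have "suminf g = (\<Sum>j. g (j + m)) + (\<Sum>i<m. g i)" by (rule suminf_split_initial_segment[OF gs])
    moreover have "(\<Sum>j. g (j + m)) = delta t n"
    proof -
      have "(\<lambda>j. g (j + m)) = (\<lambda>j. e t (n + j))" using n by (simp add: g_def m_def fun_eq_iff add.commute)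
      then show ?thesis using delta_lim(2)[of n t] dom[OF n] by simp
    qed
    moreover have "(\<Sum>i<m. g i) = delta_seq t N (n - 1)"
    proof (cases m)
      case 0
      then have "n = N" using n m_def by simp
      then show ?thesis using 0 N1 by (simp add: delta_seq_def)
    next
      case (Suc m')
      then have "n - 1 = N + m'" using n m_def by simp
      then show ?thesis using ss[of m'] Suc by simp
    qed
    ultimately show ?thesis using dN by simp
  qed
  have P6: "\<forall>n\<ge>N.
          delta t N - delta_seq t N (n - 1) = delta t n
          \<and> 1 / (24 * (real n + 1) * (t + ln (real n + 1))^2) \<le> delta t n
          \<and> delta t n \<le> 1 / (24 * (real n + 1/2) * (t + ln (real n + 1/2))^2)
                        + 1 / (24 * (real n)^2 * (t + ln (real n))^2)
                        + 1 / (12 * (real n)^2 * (t + ln (real n))^3)"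
    using split dom delta_lower delta_upper by blast
  have P7: "(\<lambda>n. delta t N - delta_seq t N (n - 1))
          \<sim>[sequentially] (\<lambda>n. 1 / (24 * real n * (ln (real n))^2))"
  proof (rule asymp_equiv_sandwich_real)
    show "(\<lambda>n::nat. 1/(24*(real n + 1)*(t + ln (real n + 1))^2)) \<sim>[sequentially] (\<lambda>n. 1 / (24 * real n * (ln (real n))^2))"
      by real_asymp
    show "(\<lambda>n::nat. 1 / (24 * (real n + 1/2) * (t + ln (real n + 1/2))^2)
                        + 1 / (24 * (real n)^2 * (t + ln (real n))^2)
                        + 1 / (12 * (real n)^2 * (t + ln (real n))^3)) \<sim>[sequentially] (\<lambda>n. 1 / (24 * real n * (ln (real n))^2))"
      by real_asymp
    show "\<forall>\<^sub>F n in sequentially. delta t N - delta_seq t N (n - 1) \<in>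
      {1/(24*(real n + 1)*(t + ln (real n + 1))^2) ..
       1 / (24 * (real n + 1/2) * (t + ln (real n + 1/2))^2)
                        + 1 / (24 * (real n)^2 * (t + ln (real n))^2)
                        + 1 / (12 * (real n)^2 * (t + ln (real n))^3)}"
      using eventually_ge_at_top[of N] by eventually_elim (use P6 in auto)
  qed
  have P8: "\<exists>C. \<forall>M::nat. M \<ge> 1 \<longrightarrow>
          (\<forall>\<^sub>F s in at_top. \<bar>delta s M\<bar> \<le> C * (1 / (real M * s^2)))"
  proof (intro exI[of _ 1] allI impI)
    fix M :: nat assume M: "M \<ge> 1"
    show "\<forall>\<^sub>F s in at_top. \<bar>delta s M\<bar> \<le> 1 * (1 / (real M * s^2))"
      using eventually_ge_at_top[of "1::real"] by eventually_elim (rule small_bound[OF M])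
  qed
  show ?thesis using P1 P2 P3 P4 P5 P6 P7 P8 by blast
qed


end
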